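(* Let $D\subseteq\mathbb{R}^3\setminus\{0\}$ be open, $\Omega=\mathbb{R}^3\times D$, and let $\vec\mu(\vec M,\vec\gamma)=\vec\nu(\vec\gamma,\vec M\cdot\vec\gamma)$ with $\vec\nu:D\times\mathbb{R}\to\mathbb{R}^3$ smooth. A smooth function $C:\Omega\to\mathbb{R}$ satisfies $\Pi_{\vec\mu}\nabla C=0$ on $\Omega$ (i.e. $C$ is a Casimir function of $\Pi_{\vec\mu}$) if and only if there is a smooth $F:D\times\mathbb{R}\to\mathbb{R}$ with $C(\vec M,\vec\gamma)=F(\vec\gamma,\vec M\cdot\vec\gamma)$ and $$\vec\gamma\times\big((\partial_sF)(\vec\gamma,s)\,\vec\nu(\vec\gamma,s)-\nabla_{\vec\gamma}F(\vec\gamma,s)\big)=\vec 0\quad\text{for all }(\vec\gamma,s)\in D\times\mathbb{R},$$ where $\nabla_{\vec\gamma}F$ is the gradient in $\vec\gamma$ with $s$ held fixed. In particular $C_1=\tfrac12|\vec\gamma|^2$ is always a Casimir function of $\Pi_{\vec\mu}$.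
   Context: Coordinates on $\mathbb{R}^6$ are $(\vec M,\vec\gamma)=(M_1,M_2,M_3,\gamma_1,\gamma_2,\gamma_3)$. For a smooth $\vec\mu=(\mu_1,\mu_2,\mu_3)$ of $(\vec M,\vec\gamma)$, $\Pi_{\vec\mu}$ is the skew-symmetric $6\times6$ matrix $$\Pi_{\vec\mu}=\begin{bmatrix}0&-M_3-\mu_3&M_2+\mu_2&0&-\gamma_3&\gamma_2\\ M_3+\mu_3&0&-M_1-\mu_1&\gamma_3&0&-\gamma_1\\ -M_2-\mu_2&M_1+\mu_1&0&-\gamma_2&\gamma_1&0\\ 0&-\gamma_3&\gamma_2&0&0&0\\ \gamma_3&0&-\gamma_1&0&0&0\\ -\gamma_2&\gamma_1&0&0&0&0\end{bmatrix},$$ and $\{f,g\}_{\vec\mu}=(\nabla f)^T\Pi_{\vec\mu}\nabla g$ for smooth $f,g$ (gradient in all six variables). *)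

theory Defs
  imports "HOL-Analysis.Analysis"
begin

fun Ck_on :: "nat \<Rightarrow> 'a::real_normed_vector set \<Rightarrow> ('a \<Rightarrow> 'b::real_normed_vector) \<Rightarrow> bool" where
  "Ck_on 0 S f = continuous_on S f"
| "Ck_on (Suc k) S f =
     (\<exists>f'. (\<forall>x\<in>S. (f has_derivative f' x) (at x)) \<and> (\<forall>v. Ck_on k S (\<lambda>x. f' x v)))"

definition smooth_on :: "'a::real_normed_vector set \<Rightarrow> ('a \<Rightarrow> 'b::real_normed_vector) \<Rightarrow> bool" where
  "smooth_on S f \<longleftrightarrow> (\<forall>k. Ck_on k S f)"

text \<open>Points of R^6 are pairs (M, gamma) of vectors in R^3; coordinates indexed 0..5 are
  M1, M2, M3, gamma1, gamma2, gamma3.\<close>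
definition coord6 :: "nat \<Rightarrow> (real^3) \<times> (real^3)" where
  "coord6 i = [(axis 1 1, 0), (axis 2 1, 0), (axis 3 1, 0),
               (0, axis 1 1), (0, axis 2 1), (0, axis 3 1)] ! i"

definition grad6 :: "((real^3) \<times> (real^3) \<Rightarrow> real) \<Rightarrow> (real^3) \<times> (real^3) \<Rightarrow> nat \<Rightarrow> real" where
  "grad6 C p i = frechet_derivative C (at p) (coord6 i)"

definition Pi_mat :: "real^3 \<Rightarrow> (real^3) \<times> (real^3) \<Rightarrow> nat \<Rightarrow> nat \<Rightarrow> real" where
  "Pi_mat mu p i j = (case p of (M, g) \<Rightarrow>
     [[0, -(M$3) - mu$3, M$2 + mu$2, 0, -(g$3), g$2],
      [M$3 + mu$3, 0, -(M$1) - mu$1, g$3, 0, -(g$1)],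
      [-(M$2) - mu$2, M$1 + mu$1, 0, -(g$2), g$1, 0],
      [0, -(g$3), g$2, 0, 0, 0],
      [g$3, 0, -(g$1), 0, 0, 0],
      [-(g$2), g$1, 0, 0, 0, 0]] ! i ! j)"

definition mu_of :: "((real^3) \<times> real \<Rightarrow> real^3) \<Rightarrow> (real^3) \<times> (real^3) \<Rightarrow> real^3" where
  "mu_of \<nu> p = (case p of (M, g) \<Rightarrow> \<nu> (g, M \<bullet> g))"

definition is_casimir :: "((real^3) \<times> real \<Rightarrow> real^3) \<Rightarrow> (real^3) set \<Rightarrow> ((real^3) \<times> (real^3) \<Rightarrow> real) \<Rightarrow> bool" where
  "is_casimir \<nu> D C \<longleftrightarrow>
     (\<forall>p \<in> UNIV \<times> D. \<forall>i<6. (\<Sum>j<6. Pi_mat (mu_of \<nu> p) p i j * grad6 C p j) = 0)"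

definition d_s :: "((real^3) \<times> real \<Rightarrow> real) \<Rightarrow> (real^3) \<times> real \<Rightarrow> real" where
  "d_s F q = frechet_derivative F (at q) (0, 1)"

definition grad_gamma :: "((real^3) \<times> real \<Rightarrow> real) \<Rightarrow> (real^3) \<times> real \<Rightarrow> real^3" where
  "grad_gamma F q = (\<chi> k. frechet_derivative F (at q) (axis k 1, 0))"

end

theory Submission
  imports Defs
begin


lemma Ck_cong: "open S \<Longrightarrow> (\<And>x. x\<in>S \<Longrightarrow> f x = g x) \<Longrightarrow> Ck_on k S f \<Longrightarrow> Ck_on k S g"
proof (cases k)
  case 0
  assume "open S" "\<And>x. x\<in>S \<Longrightarrow> f x = g x" "Ck_on k S f"
  then show ?thesis using 0 continuous_on_cong by force
next
  case (Suc n)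
  assume a: "open S" "\<And>x. x\<in>S \<Longrightarrow> f x = g x" "Ck_on k S f"
  then obtain f' where f': "\<forall>x\<in>S. (f has_derivative f' x) (at x)" "\<forall>v. Ck_on n S (\<lambda>x. f' x v)"
    using Suc by auto
  have "\<forall>x\<in>S. (g has_derivative f' x) (at x)"
    using f'(1) a by (blast intro: has_derivative_transform_within_open)
  then show ?thesis using f'(2) Suc by auto
qed

lemma Ck_Suc_mono: "Ck_on (Suc k) S f \<Longrightarrow> Ck_on k S f"
proof (induction k arbitrary: f)
  case 0
  then obtain f' where "\<forall>x\<in>S. (f has_derivative f' x) (at x)" by auto
  then show ?case
    by (auto intro!: continuous_at_imp_continuous_on dest: has_derivative_continuous)
next
  case (Suc k)
  then obtain f' where f': "\<forall>x\<in>S. (f has_derivative f' x) (at x)" "\<forall>v. Ck_on (Suc k) S (\<lambda>x. f' x v)"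
    by auto
  then show ?case using Suc.IH by auto
qed

lemma Ck_const: "Ck_on k S (\<lambda>x. c)"
proof (induction k arbitrary: c)
  case 0 then show ?case by simp
next
  case (Suc k)
  have "\<forall>x\<in>S. ((\<lambda>x. c) has_derivative (\<lambda>x h. 0) x) (at x)" by simp
  then show ?case using Suc.IH by (auto intro!: exI[of _ "\<lambda>x h. 0"])
qed

lemma Ck_linear: "bounded_linear L \<Longrightarrow> Ck_on k S L"
proof (cases k)
  case 0
  assume "bounded_linear L" then show ?thesis using 0 by (simp add: linear_continuous_on)
next
  case (Suc n)
  assume L: "bounded_linear L"
  have "\<forall>x\<in>S. (L has_derivative (\<lambda>x. L) x) (at x)" using L bounded_linear_imp_has_derivative by auto
  moreover have "\<forall>v. Ck_on n S (\<lambda>x. (\<lambda>x. L) x v)" by (simp add: Ck_const)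
  ultimately show ?thesis using Suc by (auto simp del: Ck_on.simps(2)) (auto intro: exI[of _ "\<lambda>x. L"])
qed

lemma Ck_compose_linear: "bounded_linear L \<Longrightarrow> Ck_on k S f \<Longrightarrow> Ck_on k S (\<lambda>x. L (f x))"
proof (induction k arbitrary: f)
  case 0 then show ?case
    by (auto intro: continuous_on_compose2[OF linear_continuous_on] )
next
  case (Suc k)
  then obtain f' where f': "\<forall>x\<in>S. (f has_derivative f' x) (at x)" "\<forall>v. Ck_on k S (\<lambda>x. f' x v)"
    by auto
  have "\<forall>x\<in>S. ((\<lambda>x. L (f x)) has_derivative (\<lambda>x h. L (f' x h)) x) (at x)"
    using f'(1) Suc.prems(1) bounded_linear.has_derivative by blast
  moreover have "\<forall>v. Ck_on k S (\<lambda>x. L (f' x v))" using Suc.IH[OF Suc.prems(1)] f'(2) by blast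
  ultimately show ?case by auto
qed

lemma Ck_add: "Ck_on k S f \<Longrightarrow> Ck_on k S g \<Longrightarrow> Ck_on k S (\<lambda>x. f x + g x)"
proof (induction k arbitrary: f g)
  case 0 then show ?case by (auto intro: continuous_on_add)
next
  case (Suc k)
  then obtain f' g' where f': "\<forall>x\<in>S. (f has_derivative f' x) (at x)" "\<forall>v. Ck_on k S (\<lambda>x. f' x v)"
    and g': "\<forall>x\<in>S. (g has_derivative g' x) (at x)" "\<forall>v. Ck_on k S (\<lambda>x. g' x v)"
    by auto
  have "\<forall>x\<in>S. ((\<lambda>x. f x + g x) has_derivative (\<lambda>x h. f' x h + g' x h) x) (at x)"
    using f'(1) g'(1) has_derivative_add by blast
  moreover have "\<forall>v. Ck_on k S (\<lambda>x. f' x v + g' x v)" using Suc.IH f'(2) g'(2) by blast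
  ultimately show ?case by auto
qed

lemma Ck_sum: "finite I \<Longrightarrow> (\<And>i. i \<in> I \<Longrightarrow> Ck_on k S (f i)) \<Longrightarrow> Ck_on k S (\<lambda>x. \<Sum>i\<in>I. f i x)"
  by (induction I rule: finite_induct) (auto intro: Ck_add Ck_const)

lemma Ck_bilinear: "bounded_bilinear pr \<Longrightarrow> Ck_on k S f \<Longrightarrow> Ck_on k S g \<Longrightarrow> Ck_on k S (\<lambda>x. pr (f x) (g x))"
proof (induction k arbitrary: f g)
  case 0 then show ?case by (auto intro: bounded_bilinear.continuous_on)
next
  case (Suc k)
  then obtain f' g' where f': "\<forall>x\<in>S. (f has_derivative f' x) (at x)" "\<forall>v. Ck_on k S (\<lambda>x. f' x v)"
    and g': "\<forall>x\<in>S. (g has_derivative g' x) (at x)" "\<forall>v. Ck_on k S (\<lambda>x. g' x v)"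
    by auto
  have fk: "Ck_on k S f" "Ck_on k S g" using Suc.prems Ck_Suc_mono by blast+
  have "\<forall>x\<in>S. ((\<lambda>x. pr (f x) (g x)) has_derivative (\<lambda>x h. pr (f x) (g' x h) + pr (f' x h) (g x)) x) (at x)"
    using f'(1) g'(1) bounded_bilinear.FDERIV[OF Suc.prems(1)] by blast
  moreover have "\<forall>v. Ck_on k S (\<lambda>x. pr (f x) (g' x v) + pr (f' x v) (g x))"
  proof
    fix v
    have "Ck_on k S (\<lambda>x. pr (f x) (g' x v))" using Suc.IH[OF Suc.prems(1) fk(1) g'(2)[rule_format, of v]] .
    moreover have "Ck_on k S (\<lambda>x. pr (f' x v) (g x))" using Suc.IH[OF Suc.prems(1) f'(2)[rule_format, of v] fk(2)] .
    ultimately show "Ck_on k S (\<lambda>x. pr (f x) (g' x v) + pr (f' x v) (g x))" by (rule Ck_add)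
  qed
  ultimately show ?case by auto
qed

lemma Ck_Pair: "Ck_on k S f \<Longrightarrow> Ck_on k S g \<Longrightarrow> Ck_on k S (\<lambda>x. (f x, g x))"
proof (induction k arbitrary: f g)
  case 0 then show ?case by (auto intro: continuous_on_Pair)
next
  case (Suc k)
  then obtain f' g' where f': "\<forall>x\<in>S. (f has_derivative f' x) (at x)" "\<forall>v. Ck_on k S (\<lambda>x. f' x v)"
    and g': "\<forall>x\<in>S. (g has_derivative g' x) (at x)" "\<forall>v. Ck_on k S (\<lambda>x. g' x v)"
    by auto
  have "\<forall>x\<in>S. ((\<lambda>x. (f x, g x)) has_derivative (\<lambda>x h. (f' x h, g' x h)) x) (at x)"
    using f'(1) g'(1) has_derivative_Pair by blast
  moreover have "\<forall>v. Ck_on k S (\<lambda>x. (f' x v, g' x v))" using Suc.IH f'(2) g'(2) by blast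
  ultimately show ?case by auto
qed

lemma Ck_chain:
  fixes g :: "'a::real_normed_vector \<Rightarrow> 'b::euclidean_space" and f :: "'b \<Rightarrow> 'c::real_normed_vector"
  shows "open S \<Longrightarrow> g ` S \<subseteq> T \<Longrightarrow> Ck_on k T f \<Longrightarrow> Ck_on k S g \<Longrightarrow> Ck_on k S (\<lambda>x. f (g x))"
proof (induction k arbitrary: f g)
  case 0 then show ?case by (auto intro: continuous_on_compose2)
next
  case (Suc k)
  then obtain f' g' where f': "\<forall>x\<in>T. (f has_derivative f' x) (at x)" "\<forall>v. Ck_on k T (\<lambda>x. f' x v)"
    and g': "\<forall>x\<in>S. (g has_derivative g' x) (at x)" "\<forall>v. Ck_on k S (\<lambda>x. g' x v)"
    by auto
  have gk: "Ck_on k S g" using Suc.prems Ck_Suc_mono by blast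
  have "\<forall>x\<in>S. ((\<lambda>x. f (g x)) has_derivative (\<lambda>x h. f' (g x) (g' x h)) x) (at x)"
  proof
    fix x assume x: "x \<in> S"
    then have "g x \<in> T" using Suc.prems(2) by blast
    then show "((\<lambda>x. f (g x)) has_derivative (\<lambda>h. f' (g x) (g' x h))) (at x)"
      using has_derivative_compose[OF g'(1)[rule_format, OF x] f'(1)[rule_format]] by blast
  qed
  moreover have "Ck_on k S (\<lambda>x. f' (g x) (g' x v))" for v
  proof -
    have "Ck_on k S (\<lambda>x. \<Sum>b\<in>Basis. (g' x v \<bullet> b) *\<^sub>R f' (g x) b)"
    proof (rule Ck_sum[OF finite_Basis])
      fix b :: 'b assume "b \<in> Basis"
      have "Ck_on k S (\<lambda>x. g' x v \<bullet> b)"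
        using Ck_compose_linear[OF bounded_linear_inner_left g'(2)[rule_format, of v]] .
      moreover have "Ck_on k S (\<lambda>x. f' (g x) b)"
        using Suc.IH[OF Suc.prems(1,2) f'(2)[rule_format, of b] gk] .
      ultimately show "Ck_on k S (\<lambda>x. (g' x v \<bullet> b) *\<^sub>R f' (g x) b)"
        using Ck_bilinear[OF bounded_bilinear_scaleR] by blast
    qed
    moreover have "(\<Sum>b\<in>Basis. (g' x v \<bullet> b) *\<^sub>R f' (g x) b) = f' (g x) (g' x v)" if "x \<in> S" for x
    proof -
      have lin: "linear (f' (g x))" using f'(1) that Suc.prems(2)
        by (meson has_derivative_linear image_subset_iff)
      have "f' (g x) (g' x v) = f' (g x) (\<Sum>b\<in>Basis. (g' x v \<bullet> b) *\<^sub>R b)"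
        by (simp add: euclidean_representation)
      also have "\<dots> = (\<Sum>b\<in>Basis. (g' x v \<bullet> b) *\<^sub>R f' (g x) b)"
        using lin by (simp add: linear_sum linear_scale)
      finally show ?thesis by simp
    qed
    ultimately show ?thesis by (rule Ck_cong[OF Suc.prems(1), rotated])
  qed
  ultimately show ?case by auto
qed

lemma Ck_inverse: "Ck_on k (-{0}) (inverse :: real \<Rightarrow> real)"
proof (induction k)
  case 0 then show ?case by (auto intro: continuous_on_inverse continuous_on_id)
next
  case (Suc k)
  have d: "\<And>x::real. x \<noteq> 0 \<Longrightarrow> (inverse has_derivative (\<lambda>h. - (inverse x * h * inverse x))) (at x)"
    using has_derivative_inverse' by blast
  have "\<forall>x\<in>-{0}. ((inverse::real\<Rightarrow>real) has_derivative (\<lambda>x h. - (inverse x * h * inverse x)) x) (at x)"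
    using d by simp
  moreover have "Ck_on k (-{0}) (\<lambda>x. - (inverse x * v * inverse x))" for v :: real
  proof -
    have "Ck_on k (-{0}) (\<lambda>x. inverse x * v)"
      using Ck_bilinear[OF bounded_bilinear_mult Suc.IH Ck_const] .
    then have "Ck_on k (-{0}) (\<lambda>x. (inverse x * v) * inverse x)"
      using Ck_bilinear[OF bounded_bilinear_mult _ Suc.IH] by blast
    then show ?thesis using Ck_compose_linear[OF bounded_linear_minus[OF bounded_linear_ident]] by blast
  qed
  ultimately show ?case by auto
qed


lemma sum6: "(\<Sum>j<(6::nat). f j) = f 0 + f 1 + f 2 + f 3 + f 4 + (f 5 :: real)"
  by (simp add: numeral_eq_Suc)
lemma all6: "(\<forall>i<(6::nat). P i) \<longleftrightarrow> P 0 \<and> P 1 \<and> P 2 \<and> P 3 \<and> P 4 \<and> P 5"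
proof
  assume "\<forall>i<6. P i" then show "P 0 \<and> P 1 \<and> P 2 \<and> P 3 \<and> P 4 \<and> P 5" by simp
next
  assume h: "P 0 \<and> P 1 \<and> P 2 \<and> P 3 \<and> P 4 \<and> P 5"
  show "\<forall>i<6. P i"
  proof (intro allI impI)
    fix i :: nat assume "i < 6"
    then have "i = 0 \<or> i = 1 \<or> i = 2 \<or> i = 3 \<or> i = 4 \<or> i = 5" by linarith
    then show "P i" using h by (elim disjE) simp_all
  qed
qed
lemma v3: fixes c :: "real^3" shows "c = 0 \<longleftrightarrow> c$1 = 0 \<and> c$2 = 0 \<and> c$3 = 0"
  by (auto simp: vec_eq_iff forall_3)

lemma row_equiv:
  fixes a :: "nat \<Rightarrow> real" and G mu M g :: "real^3"
  assumes "a 0 = g$1 * Fs" "a 1 = g$2*Fs" "a 2 = g$3*Fs" "a 3 = G$1 + M$1*Fs"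
    "a 4 = G$2 + M$2*Fs" "a 5 = G$3 + M$3*Fs"
  shows "(\<forall>i<6. (\<Sum>j<6. Pi_mat mu (M,g) i j * a j) = 0) \<longleftrightarrow> cross3 g (Fs *\<^sub>R mu - G) = 0"
proof -
  let ?c = "cross3 g (Fs *\<^sub>R mu - G)"
  have e0: "(\<Sum>j<6. Pi_mat mu (M,g) 0 j * a j) = - ?c$1"
    unfolding sum6 Pi_mat_def prod.case assms
    apply (simp add: cross3_def)
    by (simp add: algebra_simps)
  have e1: "(\<Sum>j<6. Pi_mat mu (M,g) 1 j * a j) = - ?c$2"
    unfolding sum6 Pi_mat_def prod.case assms
    apply (simp add: cross3_def)
    by (simp add: algebra_simps)
  have e2: "(\<Sum>j<6. Pi_mat mu (M,g) 2 j * a j) = - ?c$3"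
    unfolding sum6 Pi_mat_def prod.case assms
    apply (simp add: cross3_def)
    by (simp add: algebra_simps)
  have e3: "(\<Sum>j<6. Pi_mat mu (M,g) 3 j * a j) = 0"
    unfolding sum6 Pi_mat_def prod.case assms
    by (simp add: algebra_simps)
  have e4: "(\<Sum>j<6. Pi_mat mu (M,g) 4 j * a j) = 0"
    unfolding sum6 Pi_mat_def prod.case assms
    by (simp add: algebra_simps)
  have e5: "(\<Sum>j<6. Pi_mat mu (M,g) 5 j * a j) = 0"
    unfolding sum6 Pi_mat_def prod.case assms
    by (simp add: algebra_simps)
  show ?thesis
    unfolding all6 e0 e1 e2 e3 e4 e5 v3[of ?c] neg_equal_0_iff_equal by simp
qed

lemma t1: fixes a :: "real^3" and c :: real shows "(a, c) = (a, 0) + c *\<^sub>R (0, 1::real)" by simp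
lemma lin_pair:
  fixes L :: "(real^3) \<times> real \<Rightarrow> real"
  assumes "linear L"
  shows "L (a, c) = L (a, 0) + c * L (0, 1)"
proof -
  have "L (a, c) = L ((a, 0) + c *\<^sub>R (0, 1::real))" by (simp only: t1[symmetric])
  also have "\<dots> = L (a, 0) + L (c *\<^sub>R (0, 1::real))" by (rule linear_add[OF assms])
  also have "\<dots> = L (a, 0) + c * L (0, 1)" by (simp only: linear_scale[OF assms] real_scaleR_def)
  finally show ?thesis .
qed

lemma C_grad:
  fixes F :: "(real^3) \<times> real \<Rightarrow> real" and C :: "(real^3) \<times> (real^3) \<Rightarrow> real"
  assumes D: "open D" "g \<in> D" and dF: "F differentiable (at (g, M \<bullet> g))"
    and CF: "\<And>M g. g \<in> D \<Longrightarrow> C (M,g) = F (g, M \<bullet> g)"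
  shows "grad6 C (M,g) j = frechet_derivative F (at (g, M \<bullet> g)) (snd (coord6 j), fst (coord6 j) \<bullet> g + M \<bullet> snd (coord6 j))"
proof -
  let ?F' = "frechet_derivative F (at (g, M \<bullet> g))"
  have F: "(F has_derivative ?F') (at (g, M \<bullet> g))" using dF frechet_derivative_works by blast
  have phi0: "((\<lambda>p. (snd p, fst p \<bullet> snd p)) has_derivative (\<lambda>h. (snd h, fst (M,g) \<bullet> snd h + fst h \<bullet> snd (M,g)))) (at (M,g))"
    by (rule has_derivative_Pair[OF has_derivative_snd[OF has_derivative_ident] has_derivative_inner[OF has_derivative_fst[OF has_derivative_ident] has_derivative_snd[OF has_derivative_ident]]])
  have phi: "((\<lambda>p. (snd p, fst p \<bullet> snd p)) has_derivative (\<lambda>h. (snd h, fst h \<bullet> g + M \<bullet> snd h))) (at (M,g))"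
    using phi0 by (simp add: add.commute)
  have "((\<lambda>p. F (snd p, fst p \<bullet> snd p)) has_derivative (\<lambda>h. ?F' (snd h, fst h \<bullet> g + M \<bullet> snd h))) (at (M,g))"
    using has_derivative_compose[OF phi] F by simp
  then have "(C has_derivative (\<lambda>h. ?F' (snd h, fst h \<bullet> g + M \<bullet> snd h))) (at (M,g))"
    by (rule has_derivative_transform_within_open[where s="UNIV \<times> D"])
       (use D CF in \<open>auto simp: open_Times\<close>)
  then show ?thesis unfolding grad6_def by (simp add: frechet_derivative_at[symmetric])
qed



lemma smooth_diff: "smooth_on S f \<Longrightarrow> x \<in> S \<Longrightarrow> f differentiable (at x)"
proof -
  assume "smooth_on S f" "x \<in> S"
  then have "Ck_on (Suc 0) S f" unfolding smooth_on_def by blast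
  then obtain f' where "\<forall>x\<in>S. (f has_derivative f' x) (at x)" by auto
  then show ?thesis using \<open>x \<in> S\<close> differentiable_def by blast
qed

lemma point_equiv:
  fixes F :: "(real^3) \<times> real \<Rightarrow> real" and C :: "(real^3) \<times> (real^3) \<Rightarrow> real"
  assumes D: "open D" "g \<in> D" and dF: "F differentiable (at (g, M \<bullet> g))"
    and CF: "\<And>M g. g \<in> D \<Longrightarrow> C (M,g) = F (g, M \<bullet> g)"
  shows "(\<forall>i<6. (\<Sum>j<6. Pi_mat (mu_of \<nu> (M,g)) (M,g) i j * grad6 C (M,g) j) = 0)
     \<longleftrightarrow> cross3 g (d_s F (g, M \<bullet> g) *\<^sub>R \<nu> (g, M \<bullet> g) - grad_gamma F (g, M \<bullet> g)) = 0"
proof -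
  let ?F' = "frechet_derivative F (at (g, M \<bullet> g))"
  have lin: "linear ?F'"
    using has_derivative_linear dF frechet_derivative_works by blast
  have gr: "\<And>j. grad6 C (M,g) j = ?F' (snd (coord6 j), fst (coord6 j) \<bullet> g + M \<bullet> snd (coord6 j))"
    using C_grad[OF D dF CF] by blast
  have z: "?F' (0, 0) = 0" using linear_0[OF lin] by (simp add: zero_prod_def)
  have mu: "mu_of \<nu> (M,g) = \<nu> (g, M \<bullet> g)" by (simp add: mu_of_def)
  let ?Fs = "d_s F (g, M \<bullet> g)" and ?G = "grad_gamma F (g, M \<bullet> g)"
  have Fs: "?Fs = ?F' (0, 1)" by (simp add: d_s_def)
  have G: "\<And>k. ?G $ k = ?F' (axis k 1, 0)" by (simp add: grad_gamma_def)
  have a0: "grad6 C (M,g) 0 = g$1 * ?Fs"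
    using gr[of 0] lin_pair[OF lin, of 0 "g$1"] z Fs by (simp add: coord6_def inner_axis')
  have a1: "grad6 C (M,g) 1 = g$2 * ?Fs"
    using gr[of 1] lin_pair[OF lin, of 0 "g$2"] z Fs by (simp add: coord6_def inner_axis')
  have a2: "grad6 C (M,g) 2 = g$3 * ?Fs"
    using gr[of 2] lin_pair[OF lin, of 0 "g$3"] z Fs by (simp add: coord6_def inner_axis')
  have a3: "grad6 C (M,g) 3 = ?G$1 + M$1 * ?Fs"
    using gr[of 3] lin_pair[OF lin, of "axis 1 1" "M$1"] G[of 1] Fs by (simp add: coord6_def inner_axis)
  have a4: "grad6 C (M,g) 4 = ?G$2 + M$2 * ?Fs"
    using gr[of 4] lin_pair[OF lin, of "axis 2 1" "M$2"] G[of 2] Fs by (simp add: coord6_def inner_axis)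
  have a5: "grad6 C (M,g) 5 = ?G$3 + M$3 * ?Fs"
    using gr[of 5] lin_pair[OF lin, of "axis 3 1" "M$3"] G[of 3] Fs by (simp add: coord6_def inner_axis)
  show ?thesis unfolding mu by (rule row_equiv[OF a0 a1 a2 a3 a4 a5])
qed

lemma casimir_iff:
  fixes F :: "(real^3) \<times> real \<Rightarrow> real" and C :: "(real^3) \<times> (real^3) \<Rightarrow> real"
  assumes D: "open D" "0 \<notin> D" and dF: "\<And>q. q \<in> D \<times> UNIV \<Longrightarrow> F differentiable (at q)"
    and CF: "\<And>M g. g \<in> D \<Longrightarrow> C (M,g) = F (g, M \<bullet> g)"
  shows "is_casimir \<nu> D C \<longleftrightarrow> (\<forall>g\<in>D. \<forall>s. cross3 g (d_s F (g, s) *\<^sub>R \<nu> (g, s) - grad_gamma F (g, s)) = 0)"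
proof -
  have pe: "\<And>M g. g \<in> D \<Longrightarrow> (\<forall>i<6. (\<Sum>j<6. Pi_mat (mu_of \<nu> (M,g)) (M,g) i j * grad6 C (M,g) j) = 0)
     \<longleftrightarrow> cross3 g (d_s F (g, M \<bullet> g) *\<^sub>R \<nu> (g, M \<bullet> g) - grad_gamma F (g, M \<bullet> g)) = 0"
    using point_equiv[OF D(1) _ dF CF] by auto
  have "is_casimir \<nu> D C \<longleftrightarrow> (\<forall>M. \<forall>g\<in>D. cross3 g (d_s F (g, M \<bullet> g) *\<^sub>R \<nu> (g, M \<bullet> g) - grad_gamma F (g, M \<bullet> g)) = 0)"
    unfolding is_casimir_def using pe by auto
  also have "\<dots> \<longleftrightarrow> (\<forall>g\<in>D. \<forall>s. cross3 g (d_s F (g, s) *\<^sub>R \<nu> (g, s) - grad_gamma F (g, s)) = 0)"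
  proof
    assume h: "\<forall>M. \<forall>g\<in>D. cross3 g (d_s F (g, M \<bullet> g) *\<^sub>R \<nu> (g, M \<bullet> g) - grad_gamma F (g, M \<bullet> g)) = 0"
    show "\<forall>g\<in>D. \<forall>s. cross3 g (d_s F (g, s) *\<^sub>R \<nu> (g, s) - grad_gamma F (g, s)) = 0"
    proof (intro ballI allI)
      fix g s assume g: "g \<in> D"
      then have "g \<bullet> g \<noteq> 0" using D(2) by auto
      then have "((s / (g \<bullet> g)) *\<^sub>R g) \<bullet> g = s" by simp
      then show "cross3 g (d_s F (g, s) *\<^sub>R \<nu> (g, s) - grad_gamma F (g, s)) = 0"
        using h g by metis
    qed
  qed auto
  finally show ?thesis .
qed

lemma alg3:
  fixes g1 g2 g3 a1 a2 a3 w1 w2 w3 :: real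
  assumes r3: "-g3*a2 + g2*a3 = 0" and r4: "g3*a1 - g1*a3 = 0" and r5: "-g2*a1 + g1*a2 = 0"
    and w: "w1*g1 + w2*g2 + w3*g3 = 0" and nz: "g1 \<noteq> 0 \<or> g2 \<noteq> 0 \<or> g3 \<noteq> 0"
  shows "w1*a1 + w2*a2 + w3*a3 = 0"
proof -
  let ?S = "w1*a1 + w2*a2 + w3*a3"
  have "g1 * ?S = a1*(w1*g1 + w2*g2 + w3*g3) + w2*(-g2*a1 + g1*a2) - w3*(g3*a1 - g1*a3)"
    by (simp add: algebra_simps)
  then have 1: "g1 * ?S = 0" using r4 r5 w by simp
  have "g2 * ?S = a2*(w1*g1 + w2*g2 + w3*g3) - w1*(-g2*a1 + g1*a2) + w3*(-g3*a2 + g2*a3)"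
    by (simp add: algebra_simps)
  then have 2: "g2 * ?S = 0" using r3 r5 w by simp
  have "g3 * ?S = a3*(w1*g1 + w2*g2 + w3*g3) + w1*(g3*a1 - g1*a3) - w2*(-g3*a2 + g2*a3)"
    by (simp add: algebra_simps)
  then have 3: "g3 * ?S = 0" using r3 r4 w by simp
  show ?thesis using 1 2 3 nz by auto
qed



lemma dir_zero:
  fixes C :: "(real^3) \<times> (real^3) \<Rightarrow> real"
  assumes C': "\<forall>p\<in>UNIV\<times>D. (C has_derivative C' p) (at p)" and cas: "is_casimir \<nu> D C"
    and g: "g \<in> D" "g \<noteq> 0" and w: "w \<bullet> g = 0"
  shows "C' (M,g) (w,0) = 0"
proof -
  let ?p = "(M,g)"
  have dp: "(C has_derivative C' ?p) (at ?p)" using C' g by blast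
  have lin: "linear (C' ?p)" using has_derivative_linear[OF dp] .
  have gr: "\<And>j. grad6 C ?p j = C' ?p (coord6 j)"
    unfolding grad6_def using frechet_derivative_at[OF dp] by simp
  have rows: "\<forall>i<6. (\<Sum>j<6. Pi_mat (mu_of \<nu> ?p) ?p i j * grad6 C ?p j) = 0"
    using cas g unfolding is_casimir_def by blast
  have b0: "grad6 C ?p 0 = C' ?p (axis 1 1, 0)" by (simp add: gr coord6_def)
  have b1: "grad6 C ?p 1 = C' ?p (axis 2 1, 0)" by (simp add: gr coord6_def)
  have b2: "grad6 C ?p 2 = C' ?p (axis 3 1, 0)" by (simp add: gr coord6_def)
  have R3: "(\<Sum>j<6. Pi_mat (mu_of \<nu> ?p) ?p 3 j * grad6 C ?p j) = 0" using rows by simp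
  have R4: "(\<Sum>j<6. Pi_mat (mu_of \<nu> ?p) ?p 4 j * grad6 C ?p j) = 0" using rows by simp
  have R5: "(\<Sum>j<6. Pi_mat (mu_of \<nu> ?p) ?p 5 j * grad6 C ?p j) = 0" using rows by simp
  have r3: "-(g$3) * C' ?p (axis 2 1, 0) + g$2 * C' ?p (axis 3 1, 0) = 0"
    using R3 unfolding sum6 Pi_mat_def prod.case b1 b2 by simp
  have r4: "g$3 * C' ?p (axis 1 1, 0) - g$1 * C' ?p (axis 3 1, 0) = 0"
    using R4 unfolding sum6 Pi_mat_def prod.case b0 b2 by simp
  have r5: "-(g$2) * C' ?p (axis 1 1, 0) + g$1 * C' ?p (axis 2 1, 0) = 0"
    using R5 unfolding sum6 Pi_mat_def prod.case b0 b1 by simp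
  have wd: "(w, 0::real^3) = w$1 *\<^sub>R (axis 1 1, 0) + w$2 *\<^sub>R (axis 2 1, 0) + w$3 *\<^sub>R (axis 3 1, 0)"
    by (simp add: vec_eq_iff forall_3 axis_def)
  have "C' ?p (w, 0) = w$1 * C' ?p (axis 1 1, 0) + w$2 * C' ?p (axis 2 1, 0) + w$3 * C' ?p (axis 3 1, 0)"
    unfolding wd by (simp only: linear_add[OF lin] linear_scale[OF lin] real_scaleR_def)
  moreover have "w$1 * g$1 + w$2 * g$2 + w$3 * g$3 = 0" using w by (simp add: inner_vec_def sum_3)
  moreover have "g$1 \<noteq> 0 \<or> g$2 \<noteq> 0 \<or> g$3 \<noteq> 0" using g(2) v3 by blast
  ultimately show ?thesis using alg3[OF _ _ _ _ _] r3 r4 r5 by (metis (no_types, lifting) alg3)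
qed



lemma casimir_const:
  fixes C :: "(real^3) \<times> (real^3) \<Rightarrow> real"
  assumes sC: "smooth_on (UNIV \<times> D) C" and cas: "is_casimir \<nu> D C"
    and g: "g \<in> D" "g \<noteq> 0" and w: "w \<bullet> g = 0"
  shows "C (M + w, g) = C (M, g)"
proof -
  have "Ck_on (Suc 0) (UNIV \<times> D) C" using sC unfolding smooth_on_def by blast
  then obtain C' where C': "\<forall>p\<in>UNIV\<times>D. (C has_derivative C' p) (at p)" by auto
  define h where "h t = C (M + t *\<^sub>R w, g)" for t :: real
  have "DERIV h t :> 0" for t
  proof -
    let ?p = "(M + t *\<^sub>R w, g)"
    have dp: "(C has_derivative C' ?p) (at ?p)" using C' g by blast
    have lin: "linear (C' ?p)" using has_derivative_linear[OF dp] .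
    have e: "(\<lambda>t. (M + t *\<^sub>R w, g)) = (\<lambda>t. (M, g) + t *\<^sub>R (w, 0))"
      by (rule ext) (simp add: scaleR_Pair)
    have d1: "((\<lambda>t. (M, g) + t *\<^sub>R (w, 0)) has_derivative (\<lambda>s. 0 + s *\<^sub>R (w, 0))) (at t)"
      by (rule has_derivative_add[OF has_derivative_const bounded_linear_imp_has_derivative[OF bounded_linear_scaleR_left]])
    have d1': "((\<lambda>t. (M + t *\<^sub>R w, g)) has_derivative (\<lambda>s. 0 + s *\<^sub>R (w, 0))) (at t)"
      unfolding e by (rule d1)
    have "(h has_derivative (\<lambda>s. C' ?p (0 + s *\<^sub>R (w, 0)))) (at t)"
      unfolding h_def by (rule has_derivative_compose[OF d1' dp])
    moreover have "(\<lambda>s. C' ?p (0 + s *\<^sub>R (w, 0))) = (*) 0"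
    proof
      fix s
      have "C' ?p (0 + s *\<^sub>R (w, 0)) = s * C' ?p (w, 0)"
        by (simp only: add_0_left linear_scale[OF lin] real_scaleR_def)
      also have "\<dots> = 0" using dir_zero[OF C' cas g w] by simp
      finally show "C' ?p (0 + s *\<^sub>R (w, 0)) = 0 * s" by simp
    qed
    ultimately show ?thesis unfolding has_field_derivative_def by simp
  qed
  then have "h 1 = h 0" using DERIV_isconst_all by blast
  then show ?thesis by (simp add: h_def)
qed


lemma smooth_F:
  fixes C :: "(real^3) \<times> (real^3) \<Rightarrow> real"
  assumes D: "open D" "0 \<notin> D" and sC: "smooth_on (UNIV \<times> D) C"
  shows "smooth_on (D \<times> UNIV) (\<lambda>q. C ((snd q * inverse (fst q \<bullet> fst q)) *\<^sub>R fst q, fst q))"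
  unfolding smooth_on_def
proof
  fix k
  let ?S = "D \<times> (UNIV :: real set)"
  have oS: "open ?S" using D(1) by (simp add: open_Times)
  have fst: "Ck_on k ?S fst" by (rule Ck_linear[OF bounded_linear_fst])
  have snd: "Ck_on k ?S snd" by (rule Ck_linear[OF bounded_linear_snd])
  have ip: "Ck_on k ?S (\<lambda>q. fst q \<bullet> fst q)" using Ck_bilinear[OF bounded_bilinear_inner fst fst] .
  have im: "(\<lambda>q. fst q \<bullet> fst q) ` ?S \<subseteq> -{0}" using D(2) by auto
  have inv: "Ck_on k ?S (\<lambda>q. inverse (fst q \<bullet> fst q))"
    using Ck_chain[OF oS im Ck_inverse ip] .
  have m: "Ck_on k ?S (\<lambda>q. snd q * inverse (fst q \<bullet> fst q))"
    using Ck_bilinear[OF bounded_bilinear_mult snd inv] .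
  have s: "Ck_on k ?S (\<lambda>q. (snd q * inverse (fst q \<bullet> fst q)) *\<^sub>R fst q)"
    using Ck_bilinear[OF bounded_bilinear_scaleR m fst] .
  have psi: "Ck_on k ?S (\<lambda>q. ((snd q * inverse (fst q \<bullet> fst q)) *\<^sub>R fst q, fst q))"
    using Ck_Pair[OF s fst] .
  have im2: "(\<lambda>q. ((snd q * inverse (fst q \<bullet> fst q)) *\<^sub>R fst q, fst q)) ` ?S \<subseteq> UNIV \<times> D" by auto
  have "Ck_on k (UNIV \<times> D) C" using sC unfolding smooth_on_def by blast
  then show "Ck_on k ?S (\<lambda>q. C ((snd q * inverse (fst q \<bullet> fst q)) *\<^sub>R fst q, fst q))"
    using Ck_chain[OF oS im2 _ psi] by blast
qed



lemma C1_casimir: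
  assumes D: "open D" "0 \<notin> D"
  shows "is_casimir \<nu> D (\<lambda>(M, g). (1/2) * (norm g)\<^sup>2)"
proof -
  define F1 where "F1 q = (1/2) * (fst q \<bullet> fst q)" for q :: "(real^3) \<times> real"
  have dF: "(F1 has_derivative (\<lambda>h. (1/2) * (fst q \<bullet> fst h + fst h \<bullet> fst q))) (at q)" for q
  proof -
    have "((\<lambda>x. fst x \<bullet> fst x) has_derivative (\<lambda>h. fst q \<bullet> fst h + fst h \<bullet> fst q)) (at q)"
      by (rule bounded_bilinear.FDERIV[OF bounded_bilinear_inner has_derivative_fst[OF has_derivative_ident] has_derivative_fst[OF has_derivative_ident]])
    from bounded_linear.has_derivative[OF bounded_linear_mult_right[of "1/2"] this]
    show ?thesis unfolding F1_def .
  qed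
  have fd: "frechet_derivative F1 (at q) = (\<lambda>h. (1/2) * (fst q \<bullet> fst h + fst h \<bullet> fst q))" for q
    using frechet_derivative_at[OF dF] by simp
  have ds: "d_s F1 q = 0" for q unfolding d_s_def fd by simp
  have gg: "grad_gamma F1 q = fst q" for q
    unfolding grad_gamma_def fd by (simp add: vec_eq_iff inner_axis inner_axis')
  have CF: "(\<lambda>(M, g). (1/2) * (norm g)\<^sup>2) (M, g) = F1 (g, M \<bullet> g)" for M g :: "real^3"
    by (simp add: F1_def power2_norm_eq_inner)
  have diff: "F1 differentiable (at q)" for q using dF differentiable_def by blast
  show ?thesis
    by (subst casimir_iff[OF D diff CF]) (simp add: ds gg)
qed

theorem mainTheorem2:
  fixes D :: "(real^3) set" and \<nu> :: "(real^3) \<times> real \<Rightarrow> real^3"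
  assumes "open D" and "0 \<notin> D" and "smooth_on (D \<times> UNIV) \<nu>"
  shows "(\<forall>C :: (real^3) \<times> (real^3) \<Rightarrow> real. smooth_on (UNIV \<times> D) C \<longrightarrow>
            (is_casimir \<nu> D C \<longleftrightarrow>
              (\<exists>F :: (real^3) \<times> real \<Rightarrow> real. smooth_on (D \<times> UNIV) F \<and>
                 (\<forall>M g. g \<in> D \<longrightarrow> C (M, g) = F (g, M \<bullet> g)) \<and>
                 (\<forall>g\<in>D. \<forall>s. cross3 g (d_s F (g, s) *\<^sub>R \<nu> (g, s) - grad_gamma F (g, s)) = 0))))
         \<and> is_casimir \<nu> D (\<lambda>(M, g). (1/2) * (norm g)\<^sup>2)"
proof (intro conjI allI impI)
  show "is_casimir \<nu> D (\<lambda>(M, g). (1/2) * (norm g)\<^sup>2)" using C1_casimir assms(1,2) .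
next
  fix C :: "(real^3) \<times> (real^3) \<Rightarrow> real"
  assume sC: "smooth_on (UNIV \<times> D) C"
  show "is_casimir \<nu> D C \<longleftrightarrow>
              (\<exists>F :: (real^3) \<times> real \<Rightarrow> real. smooth_on (D \<times> UNIV) F \<and>
                 (\<forall>M g. g \<in> D \<longrightarrow> C (M, g) = F (g, M \<bullet> g)) \<and>
                 (\<forall>g\<in>D. \<forall>s. cross3 g (d_s F (g, s) *\<^sub>R \<nu> (g, s) - grad_gamma F (g, s)) = 0))"
  proof
    assume cas: "is_casimir \<nu> D C"
    define F where "F q = C ((snd q * inverse (fst q \<bullet> fst q)) *\<^sub>R fst q, fst q)" for q :: "(real^3) \<times> real"
    have sF: "smooth_on (D \<times> UNIV) F"
      unfolding F_def[abs_def] using smooth_F[OF assms(1,2) sC] .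
    have CF: "C (M, g) = F (g, M \<bullet> g)" if g: "g \<in> D" for M g
    proof -
      have gz: "g \<noteq> 0" using g assms(2) by auto
      then have gg: "g \<bullet> g \<noteq> 0" by simp
      let ?w = "((M \<bullet> g) * inverse (g \<bullet> g)) *\<^sub>R g - M"
      have w: "?w \<bullet> g = 0" using gg by (simp add: inner_diff_left)
      have "F (g, M \<bullet> g) = C (M + ?w, g)" by (simp add: F_def)
      also have "\<dots> = C (M, g)" by (rule casimir_const[OF sC cas g gz w])
      finally show ?thesis by simp
    qed
    have dF: "\<And>q. q \<in> D \<times> UNIV \<Longrightarrow> F differentiable (at q)" using smooth_diff[OF sF] .
    have "\<forall>g\<in>D. \<forall>s. cross3 g (d_s F (g, s) *\<^sub>R \<nu> (g, s) - grad_gamma F (g, s)) = 0"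
      using casimir_iff[OF assms(1,2) dF CF] cas by blast
    then show "\<exists>F :: (real^3) \<times> real \<Rightarrow> real. smooth_on (D \<times> UNIV) F \<and>
                 (\<forall>M g. g \<in> D \<longrightarrow> C (M, g) = F (g, M \<bullet> g)) \<and>
                 (\<forall>g\<in>D. \<forall>s. cross3 g (d_s F (g, s) *\<^sub>R \<nu> (g, s) - grad_gamma F (g, s)) = 0)"
      using sF CF by blast
  next
    assume "\<exists>F :: (real^3) \<times> real \<Rightarrow> real. smooth_on (D \<times> UNIV) F \<and>
                 (\<forall>M g. g \<in> D \<longrightarrow> C (M, g) = F (g, M \<bullet> g)) \<and>
                 (\<forall>g\<in>D. \<forall>s. cross3 g (d_s F (g, s) *\<^sub>R \<nu> (g, s) - grad_gamma F (g, s)) = 0)"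
    then obtain F :: "(real^3) \<times> real \<Rightarrow> real" where sF: "smooth_on (D \<times> UNIV) F"
      and CF: "\<And>M g. g \<in> D \<Longrightarrow> C (M, g) = F (g, M \<bullet> g)"
      and cr: "\<forall>g\<in>D. \<forall>s. cross3 g (d_s F (g, s) *\<^sub>R \<nu> (g, s) - grad_gamma F (g, s)) = 0"
      by blast
    have dF: "\<And>q. q \<in> D \<times> UNIV \<Longrightarrow> F differentiable (at q)" using smooth_diff[OF sF] .
    show "is_casimir \<nu> D C" using casimir_iff[OF assms(1,2) dF CF] cr by blast
  qed
qed


end
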